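(* Let $\gamma\in\mathbb Q^n$. There exists $b\in\mathbb L$ such that $\mathcal S_\Sigma(\gamma-b)\subset\mathcal C_\Sigma$, or equivalently $\mathcal S_\Sigma(\gamma)\subset(-b)+\mathcal C_\Sigma$.
   Context: $N\cong\mathbb Z^d$ lattice, $\mathcal A=\{v_1,\dots,v_n\}\subset N$ generating $N$ with a homomorphism $\mathrm h:N\to\mathbb Z$, $\mathrm h(v_j)=1$; $\mathbb L=\{l\in\mathbb Z^n:\sum l_jv_j=0\}$; $\Sigma$ the simplicial fan supported on $\mathbb R_{\ge0}\mathrm{Conv}(\mathcal A)$ from a regular triangulation with vertices in $\mathcal A$, $\Sigma(d)$ its maximal cones. For $\gamma\in\mathbb Q^n$ and $l\in\mathbb L$, $\mathrm{Supp}(l)=\{v_j:l_j+\gamma_j\notin\mathbb Z_{\ge0}\}$, and $\mathcal S_\Sigma(\gamma)$ is the set of $l\in\mathbb L$ such that all elements of $\mathrm{Supp}(l)$ generate rays of a single maximal cone of $\Sigma$. For $\sigma\in\Sigma(d)$, $\mathcal C_\sigma=\{x\in\mathbb L\otimes\mathbb R:x_j\ge0$ whenever $\mathbb R_{\ge0}v_j$ is not a ray of $\sigma\}$ and $\mathcal C_\Sigma=\sum_{\sigma\in\Sigma(d)}\mathcal C_\sigma$ (Minkowski sum). *)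

theory Defs
  imports "HOL-Analysis.Analysis"
begin

text \<open>Setting: N = Z^d is int^'d, the configuration A = {v_j} is indexed by a finite
type 'n (so n = CARD('n)), and the fan Sigma comes from the regular triangulation
induced by a height function w :: 'n => real.\<close>

definition vr :: "('n \<Rightarrow> int^'d) \<Rightarrow> 'n \<Rightarrow> real^'d" where
  "vr v j = (\<chi> i. real_of_int (v j $ i))"

definition lower_face :: "('n \<Rightarrow> int^'d) \<Rightarrow> ('n \<Rightarrow> real) \<Rightarrow> real^'d \<Rightarrow> bool" where
  "lower_face v w y \<longleftrightarrow> (\<forall>j. y \<bullet> vr v j \<le> w j)"

definition cell :: "('n \<Rightarrow> int^'d) \<Rightarrow> ('n \<Rightarrow> real) \<Rightarrow> real^'d \<Rightarrow> 'n set" where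
  "cell v w y = {j. y \<bullet> vr v j = w j}"

text \<open>The regular subdivision induced by heights w is a triangulation: every lower
face of the lifted configuration is a simplex (its points are affinely independent,
i.e. linearly independent since h(v_j) = 1).\<close>
definition regular_triangulation_heights :: "('n \<Rightarrow> int^'d) \<Rightarrow> ('n \<Rightarrow> real) \<Rightarrow> bool" where
  "regular_triangulation_heights v w \<longleftrightarrow>
     (\<forall>y::real^'d. lower_face v w y \<longrightarrow> independent (vr v ` cell v w y))"

text \<open>Maximal cones Sigma(d), identified with the index sets of their ray generators.\<close>
definition max_cones :: "('n \<Rightarrow> int^'d) \<Rightarrow> ('n \<Rightarrow> real) \<Rightarrow> 'n set set" where
  "max_cones v w = {cell v w y | y::real^'d. lower_face v w y \<and> card (cell v w y) = CARD('d)}"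

definition lattL :: "('n::finite \<Rightarrow> int^'d) \<Rightarrow> ('n \<Rightarrow> int) set" where
  "lattL v = {l. (\<Sum>j\<in>UNIV. l j *s v j) = 0}"

definition Supp :: "('n \<Rightarrow> rat) \<Rightarrow> ('n \<Rightarrow> int) \<Rightarrow> 'n set" where
  "Supp \<gamma> l = {j. \<not> (\<exists>k::nat. of_int (l j) + \<gamma> j = of_nat k)}"

definition S_Sigma :: "('n::finite \<Rightarrow> int^'d) \<Rightarrow> ('n \<Rightarrow> real) \<Rightarrow> ('n \<Rightarrow> rat) \<Rightarrow> ('n \<Rightarrow> int) set" where
  "S_Sigma v w \<gamma> = {l \<in> lattL v. \<exists>\<sigma>\<in>max_cones v w. Supp \<gamma> l \<subseteq> \<sigma>}"

text \<open>L tensor R, realised as the real kernel of j |-> v_j.\<close>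
definition LR :: "('n::finite \<Rightarrow> int^'d) \<Rightarrow> ('n \<Rightarrow> real) set" where
  "LR v = {x. (\<Sum>j\<in>UNIV. x j *\<^sub>R vr v j) = 0}"

definition C_sigma :: "('n::finite \<Rightarrow> int^'d) \<Rightarrow> 'n set \<Rightarrow> ('n \<Rightarrow> real) set" where
  "C_sigma v \<sigma> = {x \<in> LR v. \<forall>j. j \<notin> \<sigma> \<longrightarrow> x j \<ge> 0}"

definition C_Sigma :: "('n::finite \<Rightarrow> int^'d) \<Rightarrow> ('n \<Rightarrow> real) \<Rightarrow> ('n \<Rightarrow> real) set" where
  "C_Sigma v w = {x. \<exists>f. (\<forall>\<sigma>\<in>max_cones v w. f \<sigma> \<in> C_sigma v \<sigma>) \<and>
                        x = (\<lambda>j. \<Sum>\<sigma>\<in>max_cones v w. f \<sigma> j)}"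

end

theory Submission
  imports Defs
begin

lemma lattL_real:
  fixes v :: "'n::finite \<Rightarrow> int^'d"
  shows "l \<in> lattL v \<longleftrightarrow> (\<lambda>j. real_of_int (l j)) \<in> LR v"
proof -
  have e: "(\<Sum>j\<in>UNIV. real_of_int (l j) * real_of_int (v j $ i)) = real_of_int (\<Sum>j\<in>UNIV. l j * v j $ i)" for i
    by simp
  show ?thesis
    unfolding lattL_def LR_def
    by (simp add: vec_eq_iff vr_def e del: of_int_sum)
qed

lemma LR_add: "x \<in> LR v \<Longrightarrow> y \<in> LR v \<Longrightarrow> (\<lambda>j. x j + y j) \<in> LR v"
  unfolding LR_def by (simp add: scaleR_add_left sum.distrib)

lemma LR_smult: "x \<in> LR v \<Longrightarrow> (\<lambda>j. c * x j) \<in> LR v"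
proof -
  assume "x \<in> LR v"
  then have "c *\<^sub>R (\<Sum>j\<in>UNIV. x j *\<^sub>R vr v j) = 0" unfolding LR_def by simp
  then show ?thesis unfolding LR_def by (simp add: scaleR_sum_right)
qed

lemma lattL_add: "l \<in> lattL v \<Longrightarrow> m \<in> lattL v \<Longrightarrow> (\<lambda>j. l j + m j) \<in> lattL v"
  using LR_add[of "\<lambda>j. real_of_int (l j)" v "\<lambda>j. real_of_int (m j)"]
  by (simp add: lattL_real)

lemma lattL_smult: "l \<in> lattL v \<Longrightarrow> (\<lambda>j. c * l j) \<in> lattL v"
  using LR_smult[of "\<lambda>j. real_of_int (l j)" v "real_of_int c"]
  by (simp add: lattL_real)

lemma lattL_diff: "l \<in> lattL v \<Longrightarrow> m \<in> lattL v \<Longrightarrow> (\<lambda>j. l j - m j) \<in> lattL v"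
  using lattL_add[of l v "\<lambda>j. (-1) * m j"] lattL_smult[of m v "-1"] by simp

lemma C_sigma_zero: "(\<lambda>j. 0) \<in> C_sigma v \<sigma>"
  unfolding C_sigma_def LR_def by simp

lemma C_sigma_add: "x \<in> C_sigma v \<sigma> \<Longrightarrow> y \<in> C_sigma v \<sigma> \<Longrightarrow> (\<lambda>j. x j + y j) \<in> C_sigma v \<sigma>"
  unfolding C_sigma_def using LR_add[of x v y] by auto

lemma det_Ints:
  fixes M :: "real^'d^'d"
  assumes "\<forall>i j. M$i$j \<in> \<int>"
  shows "det M \<in> \<int>"
  unfolding det_def by (intro Ints_sum Ints_mult Ints_prod) (auto simp: assms)


lemma floor_Ints: "(z::real) \<in> \<int> \<Longrightarrow> real_of_int \<lfloor>z\<rfloor> = z"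
  by (auto elim: Ints_cases)

lemma inj_vr: "inj v \<Longrightarrow> inj (vr v)"
  unfolding inj_def vr_def by (auto simp: vec_eq_iff)

lemma exists_pos_lattice:
  fixes v :: "'n::finite \<Rightarrow> int^'d" and \<sigma> :: "'n set"
  assumes inj: "inj v" and ind: "independent (vr v ` \<sigma>)" and card: "card \<sigma> = CARD('d)"
  shows "\<exists>u\<in>lattL v. \<forall>j. j \<notin> \<sigma> \<longrightarrow> u j \<ge> 1"
proof -
  obtain g :: "'d \<Rightarrow> 'n" where g: "bij_betw g UNIV \<sigma>"
    using finite_same_card_bij[of "UNIV::'d set" \<sigma>] card by auto
  define A :: "real^'d^'d" where "A = (\<chi> r k. vr v (g k) $ r)"
  have col: "column k A = vr v (g k)" for k by (simp add: A_def column_def vec_eq_iff)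
  have injvr: "inj (vr v)" using inj_vr[OF inj] .
  have inj2: "inj_on (vr v \<circ> g) UNIV"
    using g injvr by (metis bij_betw_imp_inj_on comp_inj_on inj_on_subset subset_UNIV)
  have img: "(vr v \<circ> g) ` UNIV = vr v ` \<sigma>"
    using g by (metis bij_betw_imp_surj_on image_comp)
  have indep: "\<forall>c. (\<Sum>k\<in>UNIV. c k *s column k A) = 0 \<longrightarrow> (\<forall>k. c k = 0)"
  proof (intro allI impI)
    fix c :: "'d \<Rightarrow> real" and k
    assume h: "(\<Sum>k\<in>UNIV. c k *s column k A) = 0"
    define u where "u y = c (the_inv_into UNIV (vr v \<circ> g) y)" for y
    have "(\<Sum>y\<in>vr v ` \<sigma>. u y *\<^sub>R y) = (\<Sum>k\<in>UNIV. u ((vr v \<circ> g) k) *\<^sub>R (vr v \<circ> g) k)"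
      using sum.reindex[OF inj2, of "\<lambda>y. u y *\<^sub>R y"] img by simp
    also have "\<dots> = (\<Sum>k\<in>UNIV. c k *\<^sub>R vr v (g k))"
      using the_inv_into_f_f[OF inj2] by (simp add: u_def)
    also have "\<dots> = 0" using h by (simp add: col scalar_mult_eq_scaleR)
    finally have s0: "(\<Sum>y\<in>vr v ` \<sigma>. u y *\<^sub>R y) = 0" .
    show "c k = 0"
    proof (rule ccontr)
      assume "c k \<noteq> 0"
      then have "u (vr v (g k)) \<noteq> 0"
        using the_inv_into_f_f[OF inj2, of k] by (simp add: u_def)
      moreover have "vr v (g k) \<in> vr v ` \<sigma>" using g by (auto simp: bij_betw_def)
      ultimately have "dependent (vr v ` \<sigma>)"
        using s0 dependent_finite[of "vr v ` \<sigma>"] finite by blast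
      then show False using ind by simp
    qed
  qed
  then have "\<exists>B. B ** A = mat 1" by (simp add: matrix_left_invertible_independent_columns)
  then have "invertible A" using invertible_left_inverse by blast
  then have dA: "det A \<noteq> 0" using invertible_det_nz by blast
  define bb :: "real^'d" where "bb = - (\<Sum>j\<in>-\<sigma>. vr v j)"
  define x where "x = (\<chi> k. det(\<chi> i j. if j=k then bb$i else A$i$j) / det A)"
  have Ax: "A *v x = bb" using cramer[OF dA] x_def by simp
  define D where "D = det A"
  have DI: "D \<in> \<int>" unfolding D_def by (rule det_Ints) (simp add: A_def vr_def)
  have xI: "D * x$k \<in> \<int>" for k
  proof -
    have "det(\<chi> i j. if j=k then bb$i else A$i$j) \<in> \<int>"
      by (rule det_Ints) (auto simp: A_def vr_def bb_def intro!: Ints_sum Ints_minus)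
    then show ?thesis using dA by (simp add: x_def D_def)
  qed
  have D1: "D * D \<ge> 1"
  proof -
    from DI obtain m where m: "D = of_int m" by (auto elim: Ints_cases)
    then have "m \<noteq> 0" using dA D_def by auto
    then have "m * m \<ge> 1" by (simp add: int_one_le_iff_zero_less zero_less_mult_iff) linarith
    then show ?thesis using m by (metis of_int_1_le_iff of_int_mult)
  qed
  define hi where "hi = inv_into UNIV g"
  have ghi: "g (hi j) = j" if "j \<in> \<sigma>" for j
    using g that unfolding hi_def by (metis bij_betw_inv_into_right)
  have hig: "hi (g k) = k" for k
    using g unfolding hi_def by (metis bij_betw_imp_inj_on inv_into_f_f UNIV_I)
  define u :: "'n \<Rightarrow> int" where
    "u j = (if j \<in> \<sigma> then \<lfloor>D * (D * x $ hi j)\<rfloor> else \<lfloor>D * D\<rfloor>)" for j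
  have ru: "real_of_int (u j) = (if j \<in> \<sigma> then D * (D * x $ hi j) else D * D)" for j
  proof -
    have "D * (D * x $ hi j) \<in> \<int>" using Ints_mult[OF DI xI] .
    moreover have "D * D \<in> \<int>" using DI by (intro Ints_mult)
    ultimately show ?thesis unfolding u_def by (auto simp: floor_Ints)
  qed
  have "(\<Sum>j\<in>UNIV. real_of_int (u j) *\<^sub>R vr v j) = 0"
  proof -
    have split: "(\<Sum>j\<in>UNIV. real_of_int (u j) *\<^sub>R vr v j)
        = (\<Sum>j\<in>\<sigma>. real_of_int (u j) *\<^sub>R vr v j) + (\<Sum>j\<in>-\<sigma>. real_of_int (u j) *\<^sub>R vr v j)"
      using sum.subset_diff[of \<sigma> UNIV "\<lambda>j. real_of_int (u j) *\<^sub>R vr v j"]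
      by (simp add: Compl_eq_Diff_UNIV add.commute)
    have p1: "(\<Sum>j\<in>\<sigma>. real_of_int (u j) *\<^sub>R vr v j) = (D * D) *\<^sub>R (\<Sum>j\<in>\<sigma>. x $ hi j *\<^sub>R vr v j)"
      by (simp add: ru scaleR_sum_right mult.assoc)
    have "(\<Sum>j\<in>\<sigma>. x $ hi j *\<^sub>R vr v j) = (\<Sum>k\<in>UNIV. x $ hi (g k) *\<^sub>R vr v (g k))"
      using sum.reindex[OF bij_betw_imp_inj_on[OF g], of "\<lambda>j. x $ hi j *\<^sub>R vr v j"]
        bij_betw_imp_surj_on[OF g] by simp
    also have "\<dots> = A *v x"
      by (simp add: hig matrix_mult_sum col scalar_mult_eq_scaleR)
    finally have p1': "(\<Sum>j\<in>\<sigma>. x $ hi j *\<^sub>R vr v j) = bb" using Ax by simp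
    have p2: "(\<Sum>j\<in>-\<sigma>. real_of_int (u j) *\<^sub>R vr v j) = (D * D) *\<^sub>R (- bb)"
      by (simp add: ru bb_def scaleR_sum_right)
    show ?thesis using split p1 p1' p2 by simp
  qed
  then have "u \<in> lattL v" by (simp add: lattL_real LR_def)
  moreover have "\<forall>j. j \<notin> \<sigma> \<longrightarrow> u j \<ge> 1"
    using D1 by (auto simp: u_def le_floor_iff)
  ultimately show ?thesis by blast
qed


theorem lemma2p6:
  fixes v :: "'n::finite \<Rightarrow> int^'d"
    and hv :: "int^'d"
    and w :: "'n \<Rightarrow> real"
    and \<gamma> :: "'n \<Rightarrow> rat"
  assumes inj: "inj v"
    and gen: "\<forall>x::int^'d. \<exists>c::'n \<Rightarrow> int. x = (\<Sum>j\<in>UNIV. c j *s v j)"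
    and height: "\<forall>j. (\<Sum>i\<in>UNIV. hv $ i * v j $ i) = 1"
    and reg: "regular_triangulation_heights v w"
  shows "\<exists>b \<in> lattL v.
           (\<lambda>l j. real_of_int (l j)) ` S_Sigma v w (\<lambda>j. \<gamma> j - of_int (b j)) \<subseteq> C_Sigma v w"
proof (cases "max_cones v w = {}")
  case True
  have "(\<lambda>j. 0) \<in> lattL v" unfolding lattL_def by simp
  moreover have "S_Sigma v w \<gamma>' = {}" for \<gamma>' using True unfolding S_Sigma_def by simp
  ultimately show ?thesis by blast
next
  case False
  let ?MC = "max_cones v w"
  from False obtain \<sigma>0 where s0: "\<sigma>0 \<in> ?MC" by blast
  have finMC: "finite ?MC" by simp
  have "\<forall>\<tau>\<in>?MC. \<exists>u\<in>lattL v. \<forall>j. j \<notin> \<tau> \<longrightarrow> u j \<ge> 1"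
  proof
    fix \<tau> assume "\<tau> \<in> ?MC"
    then obtain y where y: "\<tau> = cell v w y" "lower_face v w y" "card (cell v w y) = CARD('d)"
      unfolding max_cones_def by blast
    have "independent (vr v ` \<tau>)" using reg y unfolding regular_triangulation_heights_def by blast
    then show "\<exists>u\<in>lattL v. \<forall>j. j \<notin> \<tau> \<longrightarrow> u j \<ge> 1"
      using exists_pos_lattice[OF inj] y by blast
  qed
  then obtain U where U: "\<And>\<tau>. \<tau> \<in> ?MC \<Longrightarrow> U \<tau> \<in> lattL v"
      "\<And>\<tau> j. \<tau> \<in> ?MC \<Longrightarrow> j \<notin> \<tau> \<Longrightarrow> U \<tau> j \<ge> 1"
    by metis
  define G :: int where "G = \<lceil>\<Sum>j\<in>UNIV. \<bar>\<gamma> j\<bar>\<rceil>"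
  have G0: "G \<ge> 0"
  proof -
    have "(\<Sum>j\<in>UNIV. \<bar>\<gamma> j\<bar>) \<ge> 0" by (simp add: sum_nonneg)
    then show ?thesis unfolding G_def zero_le_ceiling by linarith
  qed
  have Gg: "real_of_rat (\<gamma> j) \<le> real_of_int G" for j
  proof -
    have "\<gamma> j \<le> \<bar>\<gamma> j\<bar>" by simp
    also have "\<dots> \<le> (\<Sum>j\<in>UNIV. \<bar>\<gamma> j\<bar>)" by (rule member_le_sum) auto
    also have "\<dots> \<le> of_int G" unfolding G_def by (rule le_of_int_ceiling)
    finally have "\<gamma> j \<le> of_int G" .
    then have "real_of_rat (\<gamma> j) \<le> real_of_rat (of_int G)" by (simp only: of_rat_less_eq)
    then show ?thesis by simp
  qed
  define z where "z \<tau> j = G * U \<tau> j" for \<tau> j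
  have zL: "z \<tau> \<in> lattL v" if "\<tau> \<in> ?MC" for \<tau>
    using lattL_smult[OF U(1)[OF that], of G] unfolding z_def by (simp add: fun_eq_iff)
  have zG: "z \<tau> j \<ge> G" if "\<tau> \<in> ?MC" "j \<notin> \<tau>" for \<tau> j
    using U(2)[OF that] G0 unfolding z_def
    by (metis mult.right_neutral mult_left_mono)
  define M :: int where "M = (\<Sum>\<tau>\<in>?MC. \<Sum>j\<in>UNIV. \<bar>z \<tau> j\<bar>)"
  have zM: "z \<tau> j \<le> M" if "\<tau> \<in> ?MC" for \<tau> j
  proof -
    have "z \<tau> j \<le> \<bar>z \<tau> j\<bar>" by simp
    also have "\<dots> \<le> (\<Sum>j\<in>UNIV. \<bar>z \<tau> j\<bar>)" by (rule member_le_sum) auto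
    also have "\<dots> \<le> M" unfolding M_def
      by (rule member_le_sum[of _ _ "\<lambda>\<tau>. \<Sum>j\<in>UNIV. \<bar>z \<tau> j\<bar>"]) (auto simp: that sum_nonneg)
    finally show ?thesis .
  qed
  have M0: "M \<ge> 0" unfolding M_def by (simp add: sum_nonneg)
  define b where "b j = M * U \<sigma>0 j" for j
  have bL: "b \<in> lattL v"
    using lattL_smult[OF U(1)[OF s0], of M] unfolding b_def by (simp add: fun_eq_iff)
  have bM: "b j \<ge> M" if "j \<notin> \<sigma>0" for j
    using U(2)[OF s0 that] M0 unfolding b_def by (metis mult.right_neutral mult_left_mono)
  have "(\<lambda>l j. real_of_int (l j)) ` S_Sigma v w (\<lambda>j. \<gamma> j - of_int (b j)) \<subseteq> C_Sigma v w"
  proof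
    fix r assume "r \<in> (\<lambda>l j. real_of_int (l j)) ` S_Sigma v w (\<lambda>j. \<gamma> j - of_int (b j))"
    then obtain l \<tau> where r: "r = (\<lambda>j. real_of_int (l j))" and lL: "l \<in> lattL v" and t: "\<tau> \<in> ?MC"
      and sup: "Supp (\<lambda>j. \<gamma> j - of_int (b j)) l \<subseteq> \<tau>"
      unfolding S_Sigma_def by blast
    have lb: "real_of_int (l j) - real_of_int (b j) + real_of_rat (\<gamma> j) \<ge> 0" if "j \<notin> \<tau>" for j
    proof -
      from that sup obtain k :: nat where k: "of_int (l j) + (\<gamma> j - of_int (b j)) = of_nat k"
        unfolding Supp_def by blast
      have "real_of_rat (of_int (l j) + (\<gamma> j - of_int (b j))) = real_of_rat (of_nat k)"
        using k by simp
      then have "real_of_int (l j) + (real_of_rat (\<gamma> j) - real_of_int (b j)) = real k"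
        by (simp add: of_rat_add of_rat_diff)
      then show ?thesis by simp
    qed
    define x where "x j = real_of_int (l j - b j + z \<tau> j)" for j
    define y where "y j = real_of_int (b j - z \<tau> j)" for j
    have xC: "x \<in> C_sigma v \<tau>"
    proof -
      have "(\<lambda>j. l j - b j + z \<tau> j) \<in> lattL v"
        using lattL_add[OF lattL_diff[OF lL bL] zL[OF t]] by simp
      then have "x \<in> LR v" unfolding x_def lattL_real .
      moreover have "x j \<ge> 0" if "j \<notin> \<tau>" for j
        using lb[OF that] zG[OF t that] Gg[of j] unfolding x_def by simp
      ultimately show ?thesis unfolding C_sigma_def by blast
    qed
    have yC: "y \<in> C_sigma v \<sigma>0"
    proof -
      have "(\<lambda>j. b j - z \<tau> j) \<in> lattL v"
        using lattL_diff[OF bL zL[OF t]] by simp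
      then have "y \<in> LR v" unfolding y_def lattL_real .
      moreover have "y j \<ge> 0" if "j \<notin> \<sigma>0" for j
        using bM[OF that] zM[OF t, of j] unfolding y_def by simp
      ultimately show ?thesis unfolding C_sigma_def by blast
    qed
    define f where "f \<sigma> = (\<lambda>j. (if \<sigma> = \<tau> then x j else 0) + (if \<sigma> = \<sigma>0 then y j else 0))" for \<sigma>
    have fC: "f \<sigma> \<in> C_sigma v \<sigma>" for \<sigma>
    proof -
      have a: "(\<lambda>j. if \<sigma> = \<tau> then x j else 0) \<in> C_sigma v \<sigma>"
        using xC C_sigma_zero[of v \<sigma>] by (cases "\<sigma> = \<tau>") auto
      have c: "(\<lambda>j. if \<sigma> = \<sigma>0 then y j else 0) \<in> C_sigma v \<sigma>"
        using yC C_sigma_zero[of v \<sigma>] by (cases "\<sigma> = \<sigma>0") auto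
      show ?thesis using C_sigma_add[OF a c] unfolding f_def .
    qed
    have "r = (\<lambda>j. \<Sum>\<sigma>\<in>?MC. f \<sigma> j)"
    proof
      fix j
      have "(\<Sum>\<sigma>\<in>?MC. f \<sigma> j) = (\<Sum>\<sigma>\<in>?MC. if \<sigma> = \<tau> then x j else 0) + (\<Sum>\<sigma>\<in>?MC. if \<sigma> = \<sigma>0 then y j else 0)"
        unfolding f_def by (simp add: sum.distrib)
      also have "\<dots> = x j + y j" using finMC t s0 by simp
      also have "\<dots> = r j" unfolding x_def y_def r by simp
      finally show "r j = (\<Sum>\<sigma>\<in>?MC. f \<sigma> j)" by simp
    qed
    then show "r \<in> C_Sigma v w" unfolding C_Sigma_def using fC by blast
  qed
  then show ?thesis using bL by blast
qed

end
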